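(* Let $N\ge1$ and let $f_1,\dots,f_{2N+2}:\mathbb{R}\to\mathbb{R}$ be continuous convex functions. Let $v_1=\min(f_1,\dots,f_{N+1})$, $v_2=\min(f_{N+2},\dots,f_{2N+2})$ and $v=\max(v_1,v_2)$. Then $$\mathcal{C}_v\subseteq \Psi_v:=\Big(\bigcup_{1\le i\le 2N+2}\mathcal{C}_{f_i}\Big)\cup\Big(\bigcup_{1\le i<j\le 2N+2}\mathcal{S}_{f_i,f_j}\Big).$$ Moreover, if $v$ attains its global minimum on $\mathbb{R}$, then the minimum of $v(x)$ over the set $\{x : (x,y)\in\Psi_v,\ v(x)=y\}$ is attained and equals $\min_{x\in\mathbb{R}}v(x)$; in particular a global minimizer of $v$ is given by $$x^*_v\in\arg\min_x\{v(x): (x,y)\in\Psi_v,\ v(x)=y\}.$$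
   Context: For a continuous function $g:\mathbb{R}\to\mathbb{R}$, a critical point of $g$ is a point $(x,g(x))$ such that either $g$ is not differentiable at $x$ or $g'(x)=0$; $\mathcal{C}_g$ denotes the set of critical points of $g$. For two functions $g,h:\mathbb{R}\to\mathbb{R}$, $\mathcal{S}_{g,h}=\{(x,g(x)):x\in\mathbb{R},\ g(x)=h(x)\}$. Minima and maxima of functions are taken pointwise. *)

theory Defs
  imports "HOL-Analysis.Analysis"
begin

definition crit_pts :: "(real \<Rightarrow> real) \<Rightarrow> (real \<times> real) set" where
  "crit_pts g = {(x, g x) | x. \<not> (g differentiable (at x)) \<or> (g has_real_derivative 0) (at x)}"

definition inter_pts :: "(real \<Rightarrow> real) \<Rightarrow> (real \<Rightarrow> real) \<Rightarrow> (real \<times> real) set" where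
  "inter_pts g h = {(x, g x) | x. g x = h x}"

end

theory Submission
  imports Defs
begin

lemma maxmin_localA:
  fixes a b :: "nat \<Rightarrow> real"
  assumes "finite A" "finite B" "A \<noteq> {}" "B \<noteq> {}" "A \<inter> B = {}" "k \<in> A"
  and m: "max (Min (a`A)) (Min (a`B)) = a k"
  and ne: "\<forall>i\<in>A\<union>B. i \<noteq> k \<longrightarrow> a i \<noteq> a k"
  and lt: "\<forall>i\<in>A\<union>B. a i < a k \<longrightarrow> b i < b k"
  and gt: "\<forall>i\<in>A\<union>B. a i > a k \<longrightarrow> b i > b k"
  shows "max (Min (b`A)) (Min (b`B)) = b k"
proof -
  have "Min (a`B) \<in> a`B" using assms by (intro Min_in) auto
  then obtain j where j: "j \<in> B" "a j = Min (a`B)" by (auto elim!: imageE)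
  have jk: "j \<noteq> k" using j assms by auto
  have "a j \<noteq> a k" using ne j jk by auto
  hence ajk: "a j < a k" using m j by (auto simp: max_def split: if_splits)
  hence mA: "Min (a`A) = a k" using m j by (auto simp: max_def split: if_splits)
  have "\<forall>i\<in>A. b k \<le> b i"
  proof
    fix i assume i: "i \<in> A"
    show "b k \<le> b i"
    proof (cases "i = k")
      case False
      have "Min (a`A) \<le> a i" using i assms by (intro Min_le) auto
      hence "a k \<le> a i" using mA by simp
      moreover have "a i \<noteq> a k" using ne i False by auto
      ultimately have aki: "a k < a i" by linarith
      have "i \<in> A \<union> B" using i by (rule UnI1)
      hence "b k < b i" using gt aki by blast
      thus ?thesis by linarith
    qed simp
  qed
  hence bA: "Min (b`A) = b k" using assms
    by (intro antisym) (auto intro: Min_le)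
  have "Min (b`B) \<le> b j" using j assms by (auto intro: Min_le)
  also have "b j < b k" using lt j ajk by auto
  finally show ?thesis using bA by simp
qed

lemma maxmin_local:
  fixes a b :: "nat \<Rightarrow> real"
  assumes "finite A" "finite B" "A \<noteq> {}" "B \<noteq> {}" "A \<inter> B = {}" "k \<in> A \<union> B"
  and m: "max (Min (a`A)) (Min (a`B)) = a k"
  and ne: "\<forall>i\<in>A\<union>B. i \<noteq> k \<longrightarrow> a i \<noteq> a k"
  and lt: "\<forall>i\<in>A\<union>B. a i < a k \<longrightarrow> b i < b k"
  and gt: "\<forall>i\<in>A\<union>B. a i > a k \<longrightarrow> b i > b k"
  shows "max (Min (b`A)) (Min (b`B)) = b k"
proof (cases "k \<in> A")
  case True
  show ?thesis using maxmin_localA[OF assms(1-5) True m ne lt gt] .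
next
  case False
  hence k: "k \<in> B" using assms by auto
  have "max (Min (b`B)) (Min (b`A)) = b k"
    apply (rule maxmin_localA[OF assms(2,1,4,3) _ k])
    using assms by (auto simp: max.commute)
  thus ?thesis by (simp add: max.commute)
qed

theorem corollary1:
  fixes N :: nat and f :: "nat \<Rightarrow> real \<Rightarrow> real" and v :: "real \<Rightarrow> real"
    and Psi :: "(real \<times> real) set"
  assumes "N \<ge> 1"
    and "\<And>i. i \<in> {1..2*N+2} \<Longrightarrow> continuous_on UNIV (f i)"
    and "\<And>i. i \<in> {1..2*N+2} \<Longrightarrow> convex_on UNIV (f i)"
    and v_def: "v = (\<lambda>x. max (Min {f i x | i. i \<in> {1..N+1}}) (Min {f i x | i. i \<in> {N+2..2*N+2}}))"
    and Psi_def: "Psi = (\<Union>i\<in>{1..2*N+2}. crit_pts (f i)) \<union>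
                    (\<Union>i\<in>{1..2*N+2}. \<Union>j\<in>{i<..2*N+2}. inter_pts (f i) (f j))"
  shows "crit_pts v \<subseteq> Psi \<and>
         ((\<exists>x. \<forall>z. v x \<le> v z) \<longrightarrow>
            (\<exists>x0 \<in> {x. (x, v x) \<in> Psi}. (\<forall>z \<in> {x. (x, v x) \<in> Psi}. v x0 \<le> v z) \<and> (\<forall>z. v x0 \<le> v z)) \<and>
            (\<forall>xs \<in> {x. (x, v x) \<in> Psi}. (\<forall>z \<in> {x. (x, v x) \<in> Psi}. v xs \<le> v z) \<longrightarrow> (\<forall>z. v xs \<le> v z)))"
proof -
  define A where "A = {1..N+1}"
  define B where "B = {N+2..2*N+2}"
  have AB: "finite A" "finite B" "A \<noteq> {}" "B \<noteq> {}" "A \<inter> B = {}" "A \<union> B = {1..2*N+2}"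
    unfolding A_def B_def by auto
  have vv: "v y = max (Min ((\<lambda>i. f i y)`A)) (Min ((\<lambda>i. f i y)`B))" for y
    unfolding v_def A_def B_def by (simp only: setcompr_eq_image Collect_mem_eq)
  have crit: "(x, v x) \<in> Psi" if cx: "(x, v x) \<in> crit_pts v" for x
  proof (rule ccontr)
    assume nP: "(x, v x) \<notin> Psi"
    have "v x \<in> (\<lambda>i. f i x)`A \<or> v x \<in> (\<lambda>i. f i x)`B"
      using Min_in[of "(\<lambda>i. f i x)`A"] Min_in[of "(\<lambda>i. f i x)`B"] AB
      unfolding vv max_def by auto
    then obtain k where k: "k \<in> A \<union> B" "v x = f k x" by blast
    have kI: "k \<in> {1..2*N+2}" using k AB by auto
    have ne: "\<forall>i\<in>A\<union>B. i \<noteq> k \<longrightarrow> f i x \<noteq> f k x"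
    proof (intro ballI impI notI)
      fix i assume i: "i \<in> A \<union> B" "i \<noteq> k" "f i x = f k x"
      show False
      proof (cases "i < k")
        case True
        have "(x, v x) \<in> inter_pts (f i) (f k)" using i k unfolding inter_pts_def by auto
        thus False using nP True i kI AB unfolding Psi_def by auto
      next
        case False
        hence "k < i" using i by auto
        have "(x, v x) \<in> inter_pts (f k) (f i)" using i k unfolding inter_pts_def by auto
        thus False using nP \<open>k < i\<close> i kI AB unfolding Psi_def by auto
      qed
    qed
    have cont: "isCont (\<lambda>y. f i y - f k y) x" if "i \<in> A \<union> B" for i
    proof -
      have "continuous_on UNIV (f i)" "continuous_on UNIV (f k)" using assms(2) that kI AB by auto
      hence "isCont (f i) x" "isCont (f k) x" by (auto simp: continuous_on_eq_continuous_at)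
      thus ?thesis by (intro continuous_intros)
    qed
    have ev: "eventually (\<lambda>y. \<forall>i\<in>A\<union>B. (f i x < f k x \<longrightarrow> f i y < f k y) \<and> (f i x > f k x \<longrightarrow> f i y > f k y)) (at x)"
    proof (rule eventually_ball_finite)
      show "finite (A \<union> B)" using AB by auto
      show "\<forall>i\<in>A\<union>B. eventually (\<lambda>y. (f i x < f k x \<longrightarrow> f i y < f k y) \<and> (f i x > f k x \<longrightarrow> f i y > f k y)) (at x)"
      proof
        fix i assume i: "i \<in> A \<union> B"
        have t: "((\<lambda>y. f i y - f k y) \<longlongrightarrow> f i x - f k x) (at x)"
          using isContD[OF cont[OF i]] by simp
        show "eventually (\<lambda>y. (f i x < f k x \<longrightarrow> f i y < f k y) \<and> (f i x > f k x \<longrightarrow> f i y > f k y)) (at x)"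
        proof (cases "f i x < f k x")
          case True
          have "eventually (\<lambda>y. f i y - f k y < 0) (at x)"
            using order_tendstoD(2)[OF t, of 0] True by linarith
          thus ?thesis by eventually_elim (use True in auto)
        next
          case False
          show ?thesis
          proof (cases "f i x > f k x")
            case True
            have "eventually (\<lambda>y. f i y - f k y > 0) (at x)"
              using order_tendstoD(1)[OF t, of 0] True by linarith
            thus ?thesis by eventually_elim (use True in auto)
          qed (use False in auto)
        qed
      qed
    qed
    have mx: "max (Min ((\<lambda>i. f i x)`A)) (Min ((\<lambda>i. f i x)`B)) = f k x" using k vv by simp
    have evv: "eventually (\<lambda>y. v y = f k y) (at x)"
      using ev
    proof eventually_elim
      case (elim y)
      show ?case unfolding vv
        by (rule maxmin_local[OF AB(1-5) k(1) mx ne]) (use elim in auto)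
    qed
    have deq: "DERIV v x :> D \<longleftrightarrow> DERIV (f k) x :> D" for D
      by (rule has_field_derivative_cong_eventually[OF evv]) (use k in simp)
    have "(x, f k x) \<in> crit_pts (f k)"
    proof (cases "f k differentiable at x")
      case True
      then have dk: "DERIV (f k) x :> deriv (f k) x" by (simp add: DERIV_deriv_iff_real_differentiable)
      hence dv: "DERIV v x :> deriv (f k) x" using deq by simp
      hence "v differentiable at x" using DERIV_deriv_iff_real_differentiable DERIV_imp_deriv by metis
      hence "DERIV v x :> 0" using cx unfolding crit_pts_def by auto
      hence "deriv (f k) x = 0" using dv DERIV_unique by blast
      thus ?thesis using dk unfolding crit_pts_def by auto
    qed (auto simp: crit_pts_def)
    thus False using nP k kI unfolding Psi_def by auto
  qed
  have part1: "crit_pts v \<subseteq> Psi"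
  proof
    fix p assume p: "p \<in> crit_pts v"
    then obtain x where "p = (x, v x)" unfolding crit_pts_def by auto
    thus "p \<in> Psi" using crit p by auto
  qed
  have part2: "\<exists>x0 \<in> {x. (x, v x) \<in> Psi}. (\<forall>z \<in> {x. (x, v x) \<in> Psi}. v x0 \<le> v z) \<and> (\<forall>z. v x0 \<le> v z)"
    if "\<forall>z. v x \<le> v z" for x
  proof -
    have "(x, v x) \<in> crit_pts v"
    proof (cases "v differentiable at x")
      case True
      then have dk: "DERIV v x :> deriv v x" by (simp add: DERIV_deriv_iff_real_differentiable)
      have "deriv v x = 0" by (rule DERIV_local_min[OF dk, of 1]) (use that in auto)
      thus ?thesis using dk unfolding crit_pts_def by auto
    qed (auto simp: crit_pts_def)
    hence "(x, v x) \<in> Psi" using crit by auto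
    thus ?thesis using that by auto
  qed
  show ?thesis
  proof (intro conjI impI)
    show "crit_pts v \<subseteq> Psi" by (rule part1)
  next
    assume "\<exists>x. \<forall>z. v x \<le> v z"
    then obtain x where x: "\<forall>z. v x \<le> v z" by blast
    show "\<exists>x0 \<in> {x. (x, v x) \<in> Psi}. (\<forall>z \<in> {x. (x, v x) \<in> Psi}. v x0 \<le> v z) \<and> (\<forall>z. v x0 \<le> v z)"
      using part2[OF x] .
    show "\<forall>xs \<in> {x. (x, v x) \<in> Psi}. (\<forall>z \<in> {x. (x, v x) \<in> Psi}. v xs \<le> v z) \<longrightarrow> (\<forall>z. v xs \<le> v z)"
      using part2[OF x] by (meson order_trans)
  qed
qed

end
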